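(* Consider an instance of the submodular partition problem (notation in context) with $m\ge 2$ users, and let $G=\{(u_1,r_1),\dots,(u_n,r_n)\}$ be the output of the GREEDY-M algorithm, where $(u_i,r_i)$ is the pair chosen at iteration $i$, $d_i^p$ the discriminant at iteration $i$ and $c_{u_i}$ the curvature of $Z_{u_i}$. Let $\Omega$ be an optimal partition and assume $Z(\Omega)>0$. Then $$\frac{Z(G)}{Z(\Omega)}\ \ge\ \min\left(1,\ \frac{1}{\max_{1\le i\le n}\left\{c_{u_i}+\frac{1}{d_i^p}\right\}}\right),$$ with the conventions $1/\infty=0$, $1/0=\infty$.
   Context: Submodular partition problem: a finite set of resources $\mathcal{R}$ with $|\mathcal{R}|=n$ and a finite set of users $\mathcal{U}$ with $|\mathcal{U}|=m$; each user $u$ has a monotone submodular $Z_u:2^{\mathcal{R}}\to\mathbb{R}$ with $Z_u(\emptyset)=0$ (monotone: $Z_u(S)\le Z_u(T)$ for $S\subseteq T$; submodular: $Z_u(T\cup\{x\})-Z_u(T)\le Z_u(S\cup\{x\})-Z_u(S)$ for $S\subseteq T$, $x\notin T$). Let $\mathcal{V}=\mathcal{U}\times\mathcal{R}$; for $S\subseteq\mathcal{V}$ let $S_u=\{r:(u,r)\in S\}$ and $Z(S)=\sum_{u\in\mathcal{U}}Z_u(S_u)$. An allocation is $S\subseteq \mathcal{V}$ in which each resource appears in at most one pair; a partition is an allocation in which every resource appears in exactly one pair. $\Omega$ is a partition maximizing $Z$. For $S\subseteq\mathcal{V}$, $\rho^u_r(S)=Z_u(S_u\cup\{r\})-Z_u(S_u)$.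 The curvature of $Z_u$ is $c_u=1-\min\{(Z_u(S\cup\{r\})-Z_u(S))/Z_u(\{r\}): S\subseteq\mathcal{R},\ r\in\mathcal{R}\setminus S,\ Z_u(\{r\})>0\}$. GREEDY-M algorithm: $G^0=\emptyset$; for $i=1,\dots,n$, among pairs $(u,r)$ with $r$ not allocated in $G^{i-1}$, select a pair maximizing $\rho^u_r(G^{i-1})$; if several pairs attain the maximum, select among them one minimizing $c_u+1/d_i(u,r)$, where $d_i(u,r)=\rho^u_r(G^{i-1})/\max_{u'\neq u}\rho^{u'}_r(G^{i-1})$ (set to $\infty$ if the denominator is $0$); remaining ties are broken by a fixed index order of pairs. Call the selected pair $(u_i,r_i)$ and set $G^i=G^{i-1}\cup\{(u_i,r_i)\}$; output $G=G^n$. The discriminant at iteration $i$ is $d_i^p=d_i(u_i,r_i)$. *)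

theory Defs
  imports Main "HOL-Library.Extended_Real"
begin

definition sec :: "('u \<times> 'r) set \<Rightarrow> 'u \<Rightarrow> 'r set" where
  "sec S u = {r. (u, r) \<in> S}"

definition Ztot :: "'u set \<Rightarrow> ('u \<Rightarrow> 'r set \<Rightarrow> real) \<Rightarrow> ('u \<times> 'r) set \<Rightarrow> real" where
  "Ztot U Z S = (\<Sum>u\<in>U. Z u (sec S u))"

definition rho :: "('u \<Rightarrow> 'r set \<Rightarrow> real) \<Rightarrow> ('u \<times> 'r) set \<Rightarrow> 'u \<Rightarrow> 'r \<Rightarrow> real" where
  "rho Z S u r = Z u (sec S u \<union> {r}) - Z u (sec S u)"

definition monotone_fn :: "'r set \<Rightarrow> ('r set \<Rightarrow> real) \<Rightarrow> bool" where
  "monotone_fn R f \<longleftrightarrow> (\<forall>S T. S \<subseteq> T \<and> T \<subseteq> R \<longrightarrow> f S \<le> f T)"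

definition submodular_fn :: "'r set \<Rightarrow> ('r set \<Rightarrow> real) \<Rightarrow> bool" where
  "submodular_fn R f \<longleftrightarrow> (\<forall>S T x. S \<subseteq> T \<and> T \<subseteq> R \<and> x \<in> R \<and> x \<notin> T \<longrightarrow>
      f (T \<union> {x}) - f T \<le> f (S \<union> {x}) - f S)"

definition is_partition :: "'u set \<Rightarrow> 'r set \<Rightarrow> ('u \<times> 'r) set \<Rightarrow> bool" where
  "is_partition U R S \<longleftrightarrow> S \<subseteq> U \<times> R \<and> (\<forall>r\<in>R. \<exists>!u. (u, r) \<in> S)"

definition allocated :: "('u \<times> 'r) set \<Rightarrow> 'r set" where
  "allocated S = snd ` S"

(* curvature; convention: 0 if Z_u({r}) = 0 for all r (then Z_u is identically 0) *)
definition curvature :: "'r set \<Rightarrow> ('r set \<Rightarrow> real) \<Rightarrow> real" where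
  "curvature R f =
     (let Q = {(f (S \<union> {r}) - f S) / f {r} | S r. S \<subseteq> R \<and> r \<in> R \<and> r \<notin> S \<and> f {r} > 0}
      in if Q = {} then 0 else 1 - Min Q)"

definition discr :: "'u set \<Rightarrow> ('u \<Rightarrow> 'r set \<Rightarrow> real) \<Rightarrow> ('u \<times> 'r) set \<Rightarrow> 'u \<Rightarrow> 'r \<Rightarrow> ereal" where
  "discr U Z S u r =
     (let den = Max {rho Z S u' r | u'. u' \<in> U \<and> u' \<noteq> u}
      in if den = 0 then \<infinity> else ereal (rho Z S u r / den))"

(* secondary key c_u + 1/d (with 1/\<infinity> = 0, 1/0 = \<infinity>, as ereal inverse does) *)
definition tiekey :: "'u set \<Rightarrow> 'r set \<Rightarrow> ('u \<Rightarrow> 'r set \<Rightarrow> real) \<Rightarrow> ('u \<times> 'r) set \<Rightarrow> 'u \<Rightarrow> 'r \<Rightarrow> ereal" where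
  "tiekey U R Z S u r = ereal (curvature R (Z u)) + inverse (discr U Z S u r)"

definition greedy_choice ::
  "'u set \<Rightarrow> 'r set \<Rightarrow> ('u \<Rightarrow> 'r set \<Rightarrow> real) \<Rightarrow> ('u \<times> 'r \<Rightarrow> nat) \<Rightarrow> ('u \<times> 'r) set \<Rightarrow> 'u \<times> 'r \<Rightarrow> bool" where
  "greedy_choice U R Z idx S p \<longleftrightarrow>
     (case p of (u, r) \<Rightarrow>
        u \<in> U \<and> r \<in> R \<and> r \<notin> allocated S \<and>
        (\<forall>u'\<in>U. \<forall>r'\<in>R. r' \<notin> allocated S \<longrightarrow>
           rho Z S u' r' \<le> rho Z S u r \<and>
           (rho Z S u' r' = rho Z S u r \<longrightarrow>
              tiekey U R Z S u r \<le> tiekey U R Z S u' r' \<and>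
              (tiekey U R Z S u' r' = tiekey U R Z S u r \<longrightarrow> idx (u, r) \<le> idx (u', r')))))"

definition Gpre :: "(nat \<Rightarrow> 'u \<times> 'r) \<Rightarrow> nat \<Rightarrow> ('u \<times> 'r) set" where
  "Gpre p k = p ` {1..k}"

end

theory Submission
  imports Defs
begin

lemma sec_insert: "sec (insert (u,r) B) w = (if w = u then sec B u \<union> {r} else sec B w)"
  by (auto simp: sec_def)

lemma Ztot_insert:
  assumes "finite U" "u \<in> U"
  shows "Ztot U Z (insert (u,r) B) = Ztot U Z B + (Z u (sec B u \<union> {r}) - Z u (sec B u))"
proof -
  have "Ztot U Z (insert (u,r) B) = Z u (sec B u \<union> {r}) + (\<Sum>w\<in>U-{u}. Z w (sec (insert (u,r) B) w))"
    unfolding Ztot_def using assms by (simp add: sum.remove sec_insert)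
  also have "(\<Sum>w\<in>U-{u}. Z w (sec (insert (u,r) B) w)) = (\<Sum>w\<in>U-{u}. Z w (sec B w))"
    by (rule sum.cong) (auto simp: sec_insert)
  also have "Ztot U Z B = Z u (sec B u) + (\<Sum>w\<in>U-{u}. Z w (sec B w))"
    unfolding Ztot_def using assms by (simp add: sum.remove)
  ultimately show ?thesis by simp
qed

lemma curv_bound:
  assumes fR: "finite R" and mo: "monotone_fn R f" and sm: "submodular_fn R f" and f0: "f {} = 0"
    and S: "S \<subseteq> R" and r: "r \<in> R" "r \<notin> S" and le: "x \<le> f {r}" and x0: "0 \<le> x"
  shows "(1 - curvature R f) * x \<le> f (S \<union> {r}) - f S"
proof (cases "f {r} > 0")
  case True
  define Q where "Q = {(f (S \<union> {r}) - f S) / f {r} | S r. S \<subseteq> R \<and> r \<in> R \<and> r \<notin> S \<and> f {r} > 0}"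
  have Qsub: "Q \<subseteq> (\<lambda>(S,r). (f (S \<union> {r}) - f S) / f {r}) ` (Pow R \<times> R)"
    unfolding Q_def by auto
  have fQ: "finite Q" using finite_subset[OF Qsub] fR by auto
  define y where "y = (f (S \<union> {r}) - f S) / f {r}"
  have yQ: "y \<in> Q" unfolding Q_def y_def using S r True by blast
  have Qnn: "\<forall>q\<in>Q. 0 \<le> q"
  proof
    fix q assume "q \<in> Q"
    then obtain S' r' where q: "q = (f (S' \<union> {r'}) - f S') / f {r'}" "S' \<subseteq> R" "r' \<in> R" "f {r'} > 0"
      unfolding Q_def by blast
    have "S' \<union> {r'} \<subseteq> R" using q by auto
    hence "f S' \<le> f (S' \<union> {r'})" using mo[unfolded monotone_fn_def, rule_format, of S' "S' \<union> {r'}"] by blast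
    thus "0 \<le> q" using q by simp
  qed
  have c: "curvature R f = 1 - Min Q"
    unfolding curvature_def Q_def[symmetric] Let_def using yQ by auto
  have m1: "Min Q \<le> y" using fQ yQ by simp
  have m0: "0 \<le> Min Q" using Qnn fQ yQ Min_in by blast
  have "(1 - curvature R f) * x = Min Q * x" using c by simp
  also have "\<dots> \<le> Min Q * f {r}" using m0 le by (simp add: mult_left_mono)
  also have "\<dots> \<le> y * f {r}" using m1 True by (simp add: mult_right_mono)
  also have "\<dots> = f (S \<union> {r}) - f S" unfolding y_def using True by simp
  finally show ?thesis .
next
  case False
  have "f {} \<le> f {r}" using mo r unfolding monotone_fn_def by auto
  hence "x = 0" using False le x0 f0 by simp
  moreover have "S \<union> {r} \<subseteq> R" using S r by auto
  hence "f S \<le> f (S \<union> {r})" using mo[unfolded monotone_fn_def, rule_format, of S "S \<union> {r}"] by blast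
  ultimately show ?thesis by simp
qed


theorem theorem4:
  fixes U :: "'u set" and R :: "'r set" and Z :: "'u \<Rightarrow> 'r set \<Rightarrow> real"
    and idx :: "'u \<times> 'r \<Rightarrow> nat" and p :: "nat \<Rightarrow> 'u \<times> 'r"
    and \<Omega> :: "('u \<times> 'r) set"
  assumes "finite U" and "finite R" and "card U \<ge> 2"
    and "\<forall>u\<in>U. monotone_fn R (Z u) \<and> submodular_fn R (Z u) \<and> Z u {} = 0"
    and "inj_on idx (U \<times> R)"
    and "\<forall>i\<in>{1..card R}. greedy_choice U R Z idx (Gpre p (i - 1)) (p i)"
    and "is_partition U R \<Omega>"
    and "\<forall>S. is_partition U R S \<longrightarrow> Ztot U Z S \<le> Ztot U Z \<Omega>"
    and "Ztot U Z \<Omega> > 0"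
  shows "ereal (Ztot U Z (Gpre p (card R)) / Ztot U Z \<Omega>)
           \<ge> min 1 (inverse (Max {tiekey U R Z (Gpre p (i - 1)) (fst (p i)) (snd (p i)) | i. i \<in> {1..card R}}))"
proof -
  note fU = assms(1) and fR = assms(2) and cU = assms(3) and fz = assms(4)
    and gr = assms(6) and part = assms(7) and pos = assms(9)
  define n where "n = card R"
  define G where "G = Gpre p"
  have mo: "\<And>u. u \<in> U \<Longrightarrow> monotone_fn R (Z u)" using fz by blast
  have sm: "\<And>u. u \<in> U \<Longrightarrow> submodular_fn R (Z u)" using fz by blast
  have z0: "\<And>u. u \<in> U \<Longrightarrow> Z u {} = 0" using fz by blast
  have monoI: "\<And>u S T. u \<in> U \<Longrightarrow> S \<subseteq> T \<Longrightarrow> T \<subseteq> R \<Longrightarrow> Z u S \<le> Z u T"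
    using mo unfolding monotone_fn_def by blast
  have subI: "\<And>u S T x. u \<in> U \<Longrightarrow> S \<subseteq> T \<Longrightarrow> T \<subseteq> R \<Longrightarrow> x \<in> R \<Longrightarrow> x \<notin> T \<Longrightarrow>
      Z u (T \<union> {x}) - Z u T \<le> Z u (S \<union> {x}) - Z u S"
    using sm unfolding submodular_fn_def by blast
  have OmUR: "\<Omega> \<subseteq> U \<times> R" using part unfolding is_partition_def by blast
  have Omu: "\<And>r. r \<in> R \<Longrightarrow> \<exists>!v. (v, r) \<in> \<Omega>" using part unfolding is_partition_def by blast
  have secR: "\<And>S w. S \<subseteq> U \<times> R \<Longrightarrow> sec S w \<subseteq> R" unfolding sec_def by auto
  have rho0: "\<And>S w r. S \<subseteq> U \<times> R \<Longrightarrow> w \<in> U \<Longrightarrow> r \<in> R \<Longrightarrow> 0 \<le> rho Z S w r"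
  proof -
    fix S w r assume a: "S \<subseteq> U \<times> R" "w \<in> U" "r \<in> R"
    have "sec S w \<union> {r} \<subseteq> R" using secR[OF a(1)] a(3) by auto
    thus "0 \<le> rho Z S w r" unfolding rho_def using monoI[OF a(2), of "sec S w" "sec S w \<union> {r}"] by auto
  qed
  have Ztot0: "\<And>S. S \<subseteq> U \<times> R \<Longrightarrow> 0 \<le> Ztot U Z S"
    unfolding Ztot_def
  proof (rule sum_nonneg)
    fix S x assume "S \<subseteq> U \<times> R" "x \<in> U"
    thus "0 \<le> Z x (sec S x)" using monoI[of x "{}" "sec S x"] secR z0 by auto
  qed
  have Rne: "R \<noteq> {}"
  proof
    assume "R = {}"
    hence "\<Omega> = {}" using OmUR by auto
    hence "Ztot U Z \<Omega> = 0" unfolding Ztot_def sec_def using z0 by simp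
    thus False using pos by simp
  qed
  hence n1: "n \<ge> 1" unfolding n_def using fR by (simp add: Suc_leI card_gt_0_iff)
  have F1: "\<And>i. i \<in> {1..n} \<Longrightarrow> p i \<in> U \<times> R \<and> snd (p i) \<notin> snd ` G (i-1) \<and>
      (\<forall>u'\<in>U. rho Z (G (i-1)) u' (snd (p i)) \<le> rho Z (G (i-1)) (fst (p i)) (snd (p i)))"
  proof -
    fix i assume "i \<in> {1..n}"
    hence g: "greedy_choice U R Z idx (G (i - 1)) (p i)" using gr unfolding n_def G_def by blast
    obtain u r where pi: "p i = (u, r)" by fastforce
    show "?thesis i" using g unfolding greedy_choice_def pi allocated_def by auto
  qed
  have Gsub: "\<And>i. i \<le> n \<Longrightarrow> G i \<subseteq> U \<times> R"
  proof -
    fix i assume i: "i \<le> n"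
    show "G i \<subseteq> U \<times> R"
    proof
      fix x assume "x \<in> G i"
      then obtain j where "j \<in> {1..i}" "x = p j" unfolding G_def Gpre_def by blast
      thus "x \<in> U \<times> R" using F1[of j] i by auto
    qed
  qed
  have Gsuc: "\<And>i. 1 \<le> i \<Longrightarrow> G i = insert (p i) (G (i-1))"
  proof -
    fix i :: nat assume "1 \<le> i"
    hence "{1..i} = insert i {1..i-1}" by auto
    thus "G i = insert (p i) (G (i-1))" unfolding G_def Gpre_def by simp
  qed
  have G0: "G 0 = {}" unfolding G_def Gpre_def by simp
  have Gmono: "\<And>i j. i \<le> j \<Longrightarrow> G i \<subseteq> G j" unfolding G_def Gpre_def by auto
  have injr: "inj_on (snd \<circ> p) {1..n}"
  proof (rule inj_onI)
    fix i j assume ij: "i \<in> {1..n}" "j \<in> {1..n}" "(snd \<circ> p) i = (snd \<circ> p) j"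
    show "i = j"
    proof (rule ccontr)
      assume "i \<noteq> j"
      then consider "i < j" | "j < i" by linarith
      thus False
      proof cases
        case 1
        hence "p i \<in> G (j-1)" unfolding G_def Gpre_def using ij by auto
        thus False using F1[OF ij(2)] ij(3) by force
      next
        case 2
        hence "p j \<in> G (i-1)" unfolding G_def Gpre_def using ij by auto
        thus False using F1[OF ij(1)] ij(3) by force
      qed
    qed
  qed
  have allR: "snd ` G n = R"
  proof (rule card_subset_eq[OF fR])
    show "snd ` G n \<subseteq> R" using Gsub[of n] by auto
    have "snd ` G n = (snd \<circ> p) ` {1..n}" unfolding G_def Gpre_def by auto
    thus "card (snd ` G n) = card R" using card_image[OF injr] n_def by simp
  qed
  define u where "u i = fst (p i)" for i
  define r where "r i = snd (p i)" for i
  define rh where "rh i = rho Z (G (i-1)) (u i) (r i)" for i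
  define Ds where "Ds i = {rho Z (G (i-1)) u' (r i) | u'. u' \<in> U \<and> u' \<noteq> u i}" for i
  define den where "den i = Max (Ds i)" for i
  define k where "k i = curvature R (Z (u i)) + (if den i = 0 then 0 else den i / rh i)" for i
  have Dsf: "\<And>i. finite (Ds i)"
  proof -
    fix i have "Ds i = (\<lambda>u'. rho Z (G (i-1)) u' (r i)) ` (U - {u i})" unfolding Ds_def by auto
    thus "finite (Ds i)" using fU by simp
  qed
  have Dsne: "\<And>i. Ds i \<noteq> {}"
  proof -
    fix i
    have "\<not> U \<subseteq> {u i}" using cU fU card_mono[of "{u i}" U] by force
    then obtain w where "w \<in> U" "w \<noteq> u i" by blast
    thus "Ds i \<noteq> {}" unfolding Ds_def by blast
  qed
  have denge: "\<And>i v. v \<in> U \<Longrightarrow> v \<noteq> u i \<Longrightarrow> rho Z (G (i-1)) v (r i) \<le> den i"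
    unfolding den_def using Dsf by (intro Max_ge) (auto simp: Ds_def)
  have denin: "\<And>i. \<exists>v\<in>U. den i = rho Z (G (i-1)) v (r i)"
    using Max_in[OF Dsf Dsne] unfolding den_def Ds_def by blast
  have rhpos: "\<And>i. i \<in> {1..n} \<Longrightarrow> 0 \<le> rh i"
  proof -
    fix i assume i: "i \<in> {1..n}"
    have "G (i-1) \<subseteq> U \<times> R" using i by (intro Gsub) auto
    moreover have "p i \<in> U \<times> R" using F1[OF i] by auto
    ultimately show "0 \<le> rh i" unfolding rh_def u_def r_def using rho0 by auto
  qed
  have den0: "\<And>i. i \<in> {1..n} \<Longrightarrow> 0 \<le> den i \<and> den i \<le> rh i"
  proof -
    fix i assume i: "i \<in> {1..n}"
    obtain v where v: "v \<in> U" "den i = rho Z (G (i-1)) v (r i)" using denin by blast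
    have "G (i-1) \<subseteq> U \<times> R" using i by (intro Gsub) auto
    moreover have "r i \<in> R" using F1[OF i] unfolding r_def by auto
    ultimately have "0 \<le> den i" using rho0 v by auto
    moreover have "den i \<le> rh i" using F1[OF i] v unfolding rh_def u_def r_def by auto
    ultimately show "0 \<le> den i \<and> den i \<le> rh i" by blast
  qed
  have tk: "\<And>i. i \<in> {1..n} \<Longrightarrow> tiekey U R Z (G (i - 1)) (fst (p i)) (snd (p i)) = ereal (k i)"
  proof -
    fix i assume i: "i \<in> {1..n}"
    have dd: "discr U Z (G (i-1)) (fst (p i)) (snd (p i)) = (if den i = 0 then \<infinity> else ereal (rh i / den i))"
      unfolding discr_def den_def Ds_def rh_def u_def r_def Let_def by simp
    show "?thesis i"
    proof (cases "den i = 0")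
      case True thus ?thesis unfolding tiekey_def dd k_def u_def by simp
    next
      case False
      hence "0 < den i" "den i \<le> rh i" using den0[OF i] by auto
      hence "rh i / den i \<noteq> 0" by auto
      thus ?thesis using False unfolding tiekey_def dd k_def u_def by simp
    qed
  qed
  define K where "K = Max (k ` {1..n})"
  have kK: "\<And>i. i \<in> {1..n} \<Longrightarrow> k i \<le> K" unfolding K_def by simp
  have setK: "{tiekey U R Z (Gpre p (i - 1)) (fst (p i)) (snd (p i)) | i. i \<in> {1..card R}} = ereal ` (k ` {1..n})"
    using tk unfolding G_def n_def by force
  have MaxK: "Max {tiekey U R Z (Gpre p (i - 1)) (fst (p i)) (snd (p i)) | i. i \<in> {1..card R}} = ereal K"
    unfolding setK K_def using n1 by (intro mono_Max_commute[symmetric]) (auto simp: mono_def)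
  define M where "M = max 0 (K - 1)"
  define Om where "Om i = G i \<union> {x\<in>\<Omega>. snd x \<notin> snd ` G i}" for i
  have inv: "\<And>i. i \<le> n \<Longrightarrow> Ztot U Z \<Omega> - Ztot U Z (Om i) \<le> M * Ztot U Z (G i)"
  proof -
    fix i show "i \<le> n \<Longrightarrow> Ztot U Z \<Omega> - Ztot U Z (Om i) \<le> M * Ztot U Z (G i)"
    proof (induction i)
      case 0
      have "Om 0 = \<Omega>" unfolding Om_def G0 by simp
      moreover have "0 \<le> Ztot U Z (G 0)" using Ztot0 G0 by simp
      moreover have "0 \<le> M" unfolding M_def by simp
      ultimately show ?case by simp
    next
      case (Suc i)
      define j where "j = Suc i"
      have j: "j \<in> {1..n}" using Suc.prems unfolding j_def by simp
      have ji: "j - 1 = i" unfolding j_def by simp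
      have IH: "Ztot U Z \<Omega> - Ztot U Z (Om i) \<le> M * Ztot U Z (G i)" using Suc by simp
      have pj: "p j = (u j, r j)" unfolding u_def r_def by simp
      have uU: "u j \<in> U" and rR: "r j \<in> R" and rna: "r j \<notin> snd ` G i"
        using F1[OF j] ji unfolding u_def r_def by auto
      have GiUR: "G i \<subseteq> U \<times> R" using Gsub Suc.prems by simp
      have Gj: "G j = insert (u j, r j) (G i)" using Gsuc[of j] pj ji j by simp
      have ZGj: "Ztot U Z (G j) = Ztot U Z (G i) + rh j"
        unfolding Gj rh_def ji rho_def using Ztot_insert[OF fU uU] by simp
      obtain v where v: "(v, r j) \<in> \<Omega>" and vu: "\<And>w. (w, r j) \<in> \<Omega> \<Longrightarrow> w = v"
        using Omu[OF rR] by blast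
      have vU: "v \<in> U" using v OmUR by auto
      have rna': "\<And>x. x \<in> G i \<Longrightarrow> snd x \<noteq> r j" using rna by force
      define B where "B = Om i - {(v, r j)}"
      have vB: "(v, r j) \<notin> B" unfolding B_def by simp
      have uB: "(u j, r j) \<notin> B"
      proof
        assume "(u j, r j) \<in> B"
        hence "(u j, r j) \<in> G i \<or> ((u j, r j) \<in> \<Omega> \<and> u j \<noteq> v)" unfolding B_def Om_def by auto
        thus False using rna'[of "(u j, r j)"] vu by auto
      qed
      have Omi: "Om i = insert (v, r j) B" unfolding B_def Om_def using v rna by (auto simp: image_iff)
      have sGj: "snd ` G j = insert (r j) (snd ` G i)" unfolding Gj by simp
      have Omj: "Om j = insert (u j, r j) B"
      proof (rule set_eqI)
        fix x :: "'u \<times> 'r"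
        obtain a b where x: "x = (a, b)" by fastforce
        show "x \<in> Om j \<longleftrightarrow> x \<in> insert (u j, r j) B"
        proof (cases "b = r j")
          case True
          have "(a, r j) \<notin> G i" using rna' by force
          thus ?thesis unfolding x True Om_def B_def sGj Gj using vu by auto
        next
          case False
          thus ?thesis unfolding x Om_def B_def sGj Gj by auto
        qed
      qed
      have BUR: "B \<subseteq> U \<times> R" unfolding B_def Om_def using GiUR OmUR by auto
      have GB: "G i \<subseteq> B" unfolding B_def Om_def using rna' by fastforce
      define dv where "dv = Z v (sec B v \<union> {r j}) - Z v (sec B v)"
      define du where "du = Z (u j) (sec B (u j) \<union> {r j}) - Z (u j) (sec B (u j))"
      have ZOi: "Ztot U Z (Om i) = Ztot U Z B + dv"
        unfolding Omi dv_def using Ztot_insert[OF fU vU] by simp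
      have ZOj: "Ztot U Z (Om j) = Ztot U Z B + du"
        unfolding Omj du_def using Ztot_insert[OF fU uU] by simp
      have rh0: "0 \<le> rh j" using rhpos j by simp
      have M0: "0 \<le> M" unfolding M_def by simp
      have step: "Ztot U Z (Om i) - Ztot U Z (Om j) \<le> M * rh j"
      proof (cases "u j = v")
        case True
        hence "dv = du" unfolding dv_def du_def by simp
        thus ?thesis using ZOi ZOj M0 rh0 by simp
      next
        case False
        have s1: "sec (G i) v \<subseteq> sec B v" using GB unfolding sec_def by auto
        have s2: "sec B v \<subseteq> R" using secR[OF BUR] .
        have s3: "r j \<notin> sec B v" using vB unfolding sec_def by simp
        have "dv \<le> rho Z (G i) v (r j)"
          unfolding dv_def rho_def using subI[OF vU s1 s2 rR s3] .
        also have "\<dots> \<le> den j" using denge[OF vU] False ji by metis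
        finally have dv1: "dv \<le> den j" .
        have rhZ: "rh j \<le> Z (u j) {r j}"
        proof -
          have "rh j = Z (u j) (sec (G i) (u j) \<union> {r j}) - Z (u j) (sec (G i) (u j))"
            unfolding rh_def ji rho_def by simp
          also have "\<dots> \<le> Z (u j) ({} \<union> {r j}) - Z (u j) {}"
            by (rule subI[OF uU]) (use secR[OF GiUR] rR rna'[of "(u j, r j)"] in \<open>auto simp: sec_def\<close>)
          finally show ?thesis using z0[OF uU] by simp
        qed
        have du1: "(1 - curvature R (Z (u j))) * rh j \<le> du"
          unfolding du_def
          by (rule curv_bound[OF fR mo[OF uU] sm[OF uU] z0[OF uU] secR[OF BUR] rR _ rhZ rh0])
             (use uB in \<open>simp add: sec_def\<close>)
        have dk: "den j \<le> (k j - curvature R (Z (u j))) * rh j"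
        proof (cases "den j = 0")
          case True thus ?thesis unfolding k_def by simp
        next
          case False
          hence "0 < rh j" using den0[OF j] by auto
          thus ?thesis using False unfolding k_def by simp
        qed
        have "dv - du \<le> (k j - 1) * rh j" using dv1 du1 dk by (simp add: algebra_simps)
        also have "\<dots> \<le> M * rh j" using kK[OF j] rh0 unfolding M_def
          by (intro mult_right_mono) auto
        finally show ?thesis using ZOi ZOj by simp
      qed
      have "Ztot U Z \<Omega> - Ztot U Z (Om j) \<le> M * Ztot U Z (G i) + M * rh j" using IH step by simp
      thus ?case using ZGj unfolding j_def by (simp add: algebra_simps)
    qed
  qed
  have OmG: "Om n = G n" unfolding Om_def using allR OmUR by auto
  have final: "Ztot U Z \<Omega> - Ztot U Z (G n) \<le> M * Ztot U Z (G n)" using inv[of n] OmG by simp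
  define a where "a = Ztot U Z (G n)"
  define b where "b = Ztot U Z \<Omega>"
  have b0: "0 < b" using pos b_def by simp
  have ab: "b - a \<le> M * a" using final a_def b_def by simp
  have goal: "min 1 (inverse (ereal K)) \<le> ereal (a / b)"
  proof (cases "K \<le> 1")
    case True
    hence "M = 0" unfolding M_def by simp
    hence "1 \<le> a / b" using ab b0 by simp
    hence "(1::ereal) \<le> ereal (a / b)" by simp
    thus ?thesis using min.coboundedI1 order_trans by blast
  next
    case False
    hence Kp: "K > 1" "M = K - 1" unfolding M_def by auto
    have "K * a = a + M * a" unfolding Kp(2) by (simp add: algebra_simps)
    hence "b \<le> K * a" using ab by linarith
    hence "1 / K \<le> a / b" using Kp b0 by (simp add: field_simps)
    hence "inverse (ereal K) \<le> ereal (a / b)" using Kp by (simp add: inverse_eq_divide)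
    thus ?thesis using min.coboundedI2 order_trans by blast
  qed
  show ?thesis unfolding MaxK using goal unfolding a_def b_def G_def n_def by simp
qed

end
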